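(* Under the parameter assumptions in the context, the reduced system $\dot x=G(x)$ is strongly monotone on the open orthant $(0,\infty)^4$ with respect to the partial order induced by the orthant cone $C_\sigma=\{x\in\mathbb{R}^4:\sigma_ix_i\ge0\ \forall i\}$ with $\sigma=(-1,1,-1,1)$; that is, for all $t>0$ and all $x_1,x_2\in(0,\infty)^4$ with $x_1-x_2\in C_\sigma$ and $x_1\ne x_2$, one has $\phi_t(x_1)-\phi_t(x_2)\in \mathrm{int}(C_\sigma)$, where $\phi_t$ is the flow of the reduced system.
   Context: All of the following are positive real parameters: $A_s, A_z, E_{34}, E_{200}, E_S, E_Z, \beta_{34}, \beta_{-34}, \beta_{200}, \beta_{-200}, \gamma_s, \gamma_z, c_s, c_{-s}, c_z, c_{-z}, \beta_s, \beta_{s1}, \beta_{s2}, \beta_z, \beta_{z1}, \beta_{z2}, k_s, k_{s1}, k_{s2}, k_{-s}, k_z, k_{z1}, k_{z2}, k_{-z}, \delta_z$. They satisfy $\beta_s<\beta_{s1}<\beta_{s2}$, $\beta_z<\beta_{z1}<\beta_{z2}$, $k_s>k_{s1}>k_{s2}$ and $k_z>k_{z1}>k_{z2}$. For $\rho\in\{s,z\}$ define $e_{\rho1}=\beta_{\rho1}\beta_{\rho2}+(\beta_{\rho1}+\beta_{\rho2})c_{-\rho}+c_{-\rho}^2$, $e_{\rho2}=c_\rho(\beta_{\rho2}+c_{-\rho})$, $e_{\rho3}=\beta_\rho\beta_{\rho2}+\beta_{\rho1}\beta_{\rho2}+\beta_{\rho1}c_{-\rho}$, $\Delta_\rho(\mu)=\beta_{\rho2}c_\rho^2\mu^2+e_{\rho3}c_\rho\mu+e_{\rho1}\beta_\rho$,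 and $N_\rho(\mu)=\dfrac{k_\rho(\beta_{\rho2}c_\rho\mu+e_{\rho1})+k_{\rho1}e_{\rho2}\mu+k_{\rho2}c_\rho^2\mu^2}{\Delta_\rho(\mu)}$ for $\mu\ge 0$. The reduced system $\dot x=G(x)$, $x=(\mu_{34},s,\mu_{200},z)$, is $\dot\mu_{34}=\dfrac{\beta_{34}E_{34}A_sA_z}{(s^2+A_s)(z^2+A_z)}-\beta_{-34}\mu_{34}$, $\dot s=\dfrac{\gamma_sE_SA_s}{s^2+A_s}N_s(\mu_{34})-k_{-s}s$, $\dot\mu_{200}=\dfrac{\beta_{200}E_{200}A_sA_z}{(s^2+A_s)(z^2+A_z)}-\beta_{-200}\mu_{200}$, $\dot z=\delta_z+\dfrac{\gamma_zE_Zs^2z^2}{(s^2+A_s)(z^2+A_z)}N_z(\mu_{200})-k_{-z}z$. *)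

theory Defs
  imports "HOL-Analysis.Analysis"
begin

text \<open>Parameters of the model (all 31 positive reals of the paper).
  Naming: b = beta, bm = beta with negative index, g = gamma, cm = c_{-rho},
  km = k_{-rho}, dz = delta_z.\<close>

record params =
  As :: real  Az :: real  E34 :: real  E200 :: real  ES :: real  EZ :: real
  b34 :: real  bm34 :: real  b200 :: real  bm200 :: real  gs :: real  gz :: real
  cs :: real  cms :: real  cz :: real  cmz :: real
  bs :: real  bs1 :: real  bs2 :: real  bz :: real  bz1 :: real  bz2 :: real
  ks :: real  ks1 :: real  ks2 :: real  kms :: real
  kz :: real  kz1 :: real  kz2 :: real  kmz :: real  dz :: real

text \<open>Generic formulas for rho in {s,z}: arguments are
  k_rho, k_rho1, k_rho2, c_rho, c_{-rho}, beta_rho, beta_rho1, beta_rho2.\<close>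


definition e_1 :: "real \<Rightarrow> real \<Rightarrow> real \<Rightarrow> real" where
  "e_1 cm b1 b2 = b1 * b2 + (b1 + b2) * cm + cm\<^sup>2"

definition e_2 :: "real \<Rightarrow> real \<Rightarrow> real \<Rightarrow> real" where
  "e_2 c cm b2 = c * (b2 + cm)"

definition e_3 :: "real \<Rightarrow> real \<Rightarrow> real \<Rightarrow> real \<Rightarrow> real" where
  "e_3 cm b b1 b2 = b * b2 + b1 * b2 + b1 * cm"

definition Delta :: "real \<Rightarrow> real \<Rightarrow> real \<Rightarrow> real \<Rightarrow> real \<Rightarrow> real \<Rightarrow> real" where
  "Delta c cm b b1 b2 \<mu> = b2 * c\<^sup>2 * \<mu>\<^sup>2 + e_3 cm b b1 b2 * c * \<mu> + e_1 cm b1 b2 * b"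

definition Nf :: "real \<Rightarrow> real \<Rightarrow> real \<Rightarrow> real \<Rightarrow> real \<Rightarrow> real \<Rightarrow> real \<Rightarrow> real \<Rightarrow> real \<Rightarrow> real" where
  "Nf k k1 k2 c cm b b1 b2 \<mu> =
     (k * (b2 * c * \<mu> + e_1 cm b1 b2) + k1 * e_2 c cm b2 * \<mu> + k2 * c\<^sup>2 * \<mu>\<^sup>2)
     / Delta c cm b b1 b2 \<mu>"

definition N_s :: "params \<Rightarrow> real \<Rightarrow> real" where
  "N_s p = Nf (ks p) (ks1 p) (ks2 p) (cs p) (cms p) (bs p) (bs1 p) (bs2 p)"

definition N_z :: "params \<Rightarrow> real \<Rightarrow> real" where
  "N_z p = Nf (kz p) (kz1 p) (kz2 p) (cz p) (cmz p) (bz p) (bz1 p) (bz2 p)"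

definition G :: "params \<Rightarrow> real^4 \<Rightarrow> real^4" where
  "G p x = (let m34 = x$1; s = x$2; m200 = x$3; z = x$4 in
     (\<chi> i. if i = 1 then
              b34 p * E34 p * As p * Az p / ((s\<^sup>2 + As p) * (z\<^sup>2 + Az p)) - bm34 p * m34
            else if i = 2 then
              gs p * ES p * As p / (s\<^sup>2 + As p) * N_s p m34 - kms p * s
            else if i = 3 then
              b200 p * E200 p * As p * Az p / ((s\<^sup>2 + As p) * (z\<^sup>2 + Az p)) - bm200 p * m200
            else
              dz p + gz p * EZ p * s\<^sup>2 * z\<^sup>2 / ((s\<^sup>2 + As p) * (z\<^sup>2 + Az p)) * N_z p m200
                - kmz p * z))"

definition sigma :: "real^4" where
  "sigma = (\<chi> i. if i = 1 \<or> i = 3 then -1 else 1)"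

definition C_sigma :: "(real^4) set" where
  "C_sigma = {x. \<forall>i. sigma$i * x$i \<ge> 0}"

definition open_orthant :: "(real^4) set" where
  "open_orthant = {x. \<forall>i. x$i > 0}"

end

theory Submission
  imports Defs
begin


lemma e1_pos: "cm > 0 \<Longrightarrow> b1 > 0 \<Longrightarrow> b2 > 0 \<Longrightarrow> e_1 cm b1 b2 > 0"
  unfolding e_1_def by (intro add_pos_pos mult_pos_pos) auto

lemma Delta_pos:
  assumes "c > 0" "cm > 0" "b > 0" "b1 > 0" "b2 > 0" "\<mu> \<ge> 0"
  shows "Delta c cm b b1 b2 \<mu> > 0"
proof -
  have "e_1 cm b1 b2 * b > 0" using assms by (simp add: e1_pos)
  moreover have "e_3 cm b b1 b2 > 0" using assms unfolding e_3_def
    by (intro add_pos_pos mult_pos_pos) auto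
  ultimately show ?thesis using assms unfolding Delta_def
    by (intro add_nonneg_pos add_nonneg_nonneg mult_nonneg_nonneg) auto
qed

lemma Nf_pos:
  assumes "c > 0" "cm > 0" "b > 0" "b1 > 0" "b2 > 0" "\<mu> \<ge> 0" "k > 0" "k1 > 0" "k2 > 0"
  shows "Nf k k1 k2 c cm b b1 b2 \<mu> > 0"
proof -
  have "e_1 cm b1 b2 > 0" using assms by (simp add: e1_pos)
  hence "k * (b2 * c * \<mu> + e_1 cm b1 b2) > 0" using assms by (intro mult_pos_pos add_nonneg_pos) auto
  moreover have "e_2 c cm b2 > 0" using assms by (simp add: e_2_def)
  ultimately have "k * (b2 * c * \<mu> + e_1 cm b1 b2) + k1 * e_2 c cm b2 * \<mu> + k2 * c\<^sup>2 * \<mu>\<^sup>2 > 0"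
    using assms by (intro add_pos_nonneg mult_nonneg_nonneg) auto
  thus ?thesis unfolding Nf_def using Delta_pos[OF assms(1-6)] by simp
qed

lemma Nf_strict_anti:
  assumes "c > 0" "cm > 0" "b > 0" "b1 > 0" "b2 > 0" "k > 0" "k1 > 0" "k2 > 0"
    "b < b1" "b1 < b2" "k1 < k" "k2 < k1" "0 \<le> \<mu>" "\<mu> < \<nu>"
  shows "Nf k k1 k2 c cm b b1 b2 \<nu> < Nf k k1 k2 c cm b b1 b2 \<mu>"
proof -
  define e1 where "e1 = e_1 cm b1 b2"
  define P where "P = (\<lambda>\<mu>. k * (b2 * c * \<mu> + e1) + k1 * e_2 c cm b2 * \<mu> + k2 * c\<^sup>2 * \<mu>\<^sup>2)"
  define A where "A = e1 * c * (b2 + cm) * (k * b1 - k1 * b)"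
  define B where "B = e1 * c^2 * (k * b2 - k2 * b)"
  define C where "C = c^3 * ((k * b2^2 - k2 * b * b2) + (k1 * b2 - k2 * b1) * (b2 + cm))"
  have id: "P \<mu> * Delta c cm b b1 b2 \<nu> - P \<nu> * Delta c cm b b1 b2 \<mu>
      = (\<nu> - \<mu>) * (A + B * (\<nu> + \<mu>) + C * \<mu> * \<nu>)"
    unfolding P_def A_def B_def C_def Delta_def e1_def e_2_def e_3_def
    by (simp add: power2_eq_square power3_eq_cube) algebra
  have e1: "e1 > 0" using assms by (simp add: e1_def e1_pos)
  have "k * b1 > k1 * b1" using assms by simp
  moreover have "k1 * b1 > k1 * b" using assms by simp
  ultimately have "k * b1 - k1 * b > 0" by simp
  hence A: "A > 0" using assms e1 unfolding A_def by (intro mult_pos_pos) auto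
  have "k * b2 > k2 * b2" using assms by simp
  moreover have "k2 * b2 > k2 * b" using assms by simp
  ultimately have kb: "k * b2 > k2 * b" by simp
  hence B: "B > 0" using assms e1 unfolding B_def by (intro mult_pos_pos) auto
  have "k * b2 * b2 > k2 * b * b2" using kb assms by simp
  hence c1: "k * b2^2 - k2 * b * b2 > 0" by (simp add: power2_eq_square)
  have "k1 * b2 > k2 * b1" using assms
    by (smt (verit) mult_strict_mono)
  hence "(k1 * b2 - k2 * b1) * (b2 + cm) > 0" using assms by (intro mult_pos_pos) auto
  hence "(k * b2^2 - k2 * b * b2) + (k1 * b2 - k2 * b1) * (b2 + cm) > 0" using c1 by linarith
  hence "C > 0" using assms unfolding C_def by simp
  hence "A + B * (\<nu> + \<mu>) + C * \<mu> * \<nu> > 0" using A B assms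
    by (intro add_pos_nonneg mult_nonneg_nonneg) auto
  hence "P \<nu> * Delta c cm b b1 b2 \<mu> < P \<mu> * Delta c cm b b1 b2 \<nu>"
    using id assms by (smt (verit) mult_pos_pos)
  moreover have "Delta c cm b b1 b2 \<mu> > 0" "Delta c cm b b1 b2 \<nu> > 0"
    using Delta_pos assms by auto
  moreover have eq: "\<And>x. Nf k k1 k2 c cm b b1 b2 x = P x / Delta c cm b b1 b2 x"
    by (simp add: Nf_def P_def e1_def)
  ultimately show ?thesis unfolding eq
    by (simp add: field_simps mult.commute)
qed




definition box4 :: "real \<Rightarrow> (real^4) set" where
  "box4 R = {x. \<forall>j. 0 \<le> x$j \<and> x$j \<le> R}"

definition nice :: "real \<Rightarrow> (real^4 \<Rightarrow> real) \<Rightarrow> bool" where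
  "nice R f \<longleftrightarrow> (\<exists>L\<ge>0. \<forall>x\<in>box4 R. \<forall>y\<in>box4 R. \<bar>f x - f y\<bar> \<le> L * dist x y)
     \<and> (\<exists>M\<ge>0. \<forall>x\<in>box4 R. \<bar>f x\<bar> \<le> M)"

lemma niceI:
  assumes "0 \<le> L" "\<And>x y. x\<in>box4 R \<Longrightarrow> y\<in>box4 R \<Longrightarrow> \<bar>f x - f y\<bar> \<le> L * dist x y"
    "0 \<le> M" "\<And>x. x\<in>box4 R \<Longrightarrow> \<bar>f x\<bar> \<le> M"
  shows "nice R f"
  unfolding nice_def using assms by blast

lemma niceE:
  assumes "nice R f"
  obtains L M where "0 \<le> L" "\<And>x y. x\<in>box4 R \<Longrightarrow> y\<in>box4 R \<Longrightarrow> \<bar>f x - f y\<bar> \<le> L * dist x y"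
    "0 \<le> M" "\<And>x. x\<in>box4 R \<Longrightarrow> \<bar>f x\<bar> \<le> M"
  using assms unfolding nice_def by blast

lemma nice_const: "nice R (\<lambda>x. c)"
  by (rule niceI[of 0 _ _ "\<bar>c\<bar>"]) auto

lemma nice_nth: "nice R (\<lambda>x. x$j)"
proof (rule niceI[of 1 _ _ "\<bar>R\<bar>"])
  fix x y :: "real^4"
  show "\<bar>x $ j - y $ j\<bar> \<le> 1 * dist x y"
    using dist_vec_nth_le[of x j y] by (simp add: dist_real_def)
next
  fix x assume "x \<in> box4 R"
  thus "\<bar>x $ j\<bar> \<le> \<bar>R\<bar>" unfolding box4_def by (metis (mono_tags) abs_of_nonneg mem_Collect_eq abs_ge_self order.trans)
qed auto

lemma nice_add: assumes "nice R f" "nice R g" shows "nice R (\<lambda>x. f x + g x)"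
proof -
  obtain L1 M1 where h1: "0 \<le> L1" "\<And>x y. x\<in>box4 R \<Longrightarrow> y\<in>box4 R \<Longrightarrow> \<bar>f x - f y\<bar> \<le> L1 * dist x y"
    "0 \<le> M1" "\<And>x. x\<in>box4 R \<Longrightarrow> \<bar>f x\<bar> \<le> M1" using niceE[OF assms(1)] by blast
  obtain L2 M2 where h2: "0 \<le> L2" "\<And>x y. x\<in>box4 R \<Longrightarrow> y\<in>box4 R \<Longrightarrow> \<bar>g x - g y\<bar> \<le> L2 * dist x y"
    "0 \<le> M2" "\<And>x. x\<in>box4 R \<Longrightarrow> \<bar>g x\<bar> \<le> M2" using niceE[OF assms(2)] by blast
  show ?thesis
  proof (rule niceI[of "L1+L2" _ _ "M1+M2"])
    fix x y assume "x \<in> box4 R" "y \<in> box4 R"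
    thus "\<bar>f x + g x - (f y + g y)\<bar> \<le> (L1 + L2) * dist x y"
      using h1(2)[of x y] h2(2)[of x y] by (smt (verit, best) distrib_right)
  next
    fix x assume "x \<in> box4 R"
    thus "\<bar>f x + g x\<bar> \<le> M1 + M2" using h1(4)[of x] h2(4)[of x] by (smt (verit))
  qed (use h1 h2 in auto)
qed

lemma nice_neg: assumes "nice R f" shows "nice R (\<lambda>x. - f x)"
proof -
  obtain L1 M1 where h1: "0 \<le> L1" "\<And>x y. x\<in>box4 R \<Longrightarrow> y\<in>box4 R \<Longrightarrow> \<bar>f x - f y\<bar> \<le> L1 * dist x y"
    "0 \<le> M1" "\<And>x. x\<in>box4 R \<Longrightarrow> \<bar>f x\<bar> \<le> M1" using niceE[OF assms(1)] by blast
  show ?thesis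
    by (rule niceI[of L1 _ _ M1]) (use h1 in \<open>auto simp: abs_minus_commute\<close>)
qed

lemma nice_diff: "nice R f \<Longrightarrow> nice R g \<Longrightarrow> nice R (\<lambda>x. f x - g x)"
  using nice_add[OF _ nice_neg, of R f g] by simp

lemma nice_mult: assumes "nice R f" "nice R g" shows "nice R (\<lambda>x. f x * g x)"
proof -
  obtain L1 M1 where h1: "0 \<le> L1" "\<And>x y. x\<in>box4 R \<Longrightarrow> y\<in>box4 R \<Longrightarrow> \<bar>f x - f y\<bar> \<le> L1 * dist x y"
    "0 \<le> M1" "\<And>x. x\<in>box4 R \<Longrightarrow> \<bar>f x\<bar> \<le> M1" using niceE[OF assms(1)] by blast
  obtain L2 M2 where h2: "0 \<le> L2" "\<And>x y. x\<in>box4 R \<Longrightarrow> y\<in>box4 R \<Longrightarrow> \<bar>g x - g y\<bar> \<le> L2 * dist x y"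
    "0 \<le> M2" "\<And>x. x\<in>box4 R \<Longrightarrow> \<bar>g x\<bar> \<le> M2" using niceE[OF assms(2)] by blast
  show ?thesis
  proof (rule niceI[of "M1*L2+M2*L1" _ _ "M1*M2"])
    fix x y assume xy: "x \<in> box4 R" "y \<in> box4 R"
    have "\<bar>f x * g x - f y * g y\<bar> = \<bar>f x * (g x - g y) + g y * (f x - f y)\<bar>"
      by (simp add: algebra_simps)
    also have "\<dots> \<le> \<bar>f x\<bar> * \<bar>g x - g y\<bar> + \<bar>g y\<bar> * \<bar>f x - f y\<bar>"
      by (metis abs_mult abs_triangle_ineq)
    also have "\<dots> \<le> M1 * (L2 * dist x y) + M2 * (L1 * dist x y)"
      using xy h1 h2 by (intro add_mono mult_mono) auto
    finally show "\<bar>f x * g x - f y * g y\<bar> \<le> (M1 * L2 + M2 * L1) * dist x y"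
      by (simp add: algebra_simps)
  next
    fix x assume "x \<in> box4 R"
    thus "\<bar>f x * g x\<bar> \<le> M1 * M2" using h1 h2 by (simp add: abs_mult mult_mono)
  qed (use h1 h2 in auto)
qed

lemma nice_power: "nice R f \<Longrightarrow> nice R (\<lambda>x. f x ^ n)"
  by (induction n) (auto intro: nice_const nice_mult)

lemma nice_inverse:
  assumes "nice R f" "c > 0" "\<forall>x\<in>box4 R. c \<le> f x"
  shows "nice R (\<lambda>x. 1 / f x)"
proof -
  obtain L1 M1 where h: "0 \<le> L1" "\<And>x y. x\<in>box4 R \<Longrightarrow> y\<in>box4 R \<Longrightarrow> \<bar>f x - f y\<bar> \<le> L1 * dist x y"
    "0 \<le> M1" "\<And>x. x\<in>box4 R \<Longrightarrow> \<bar>f x\<bar> \<le> M1" using niceE[OF assms(1)] by blast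
  show ?thesis
  proof (rule niceI[of "L1 / c^2" _ _ "1/c"])
    fix x y assume xy: "x \<in> box4 R" "y \<in> box4 R"
    have fx: "f x \<ge> c" "f y \<ge> c" using xy assms by auto
    hence "\<bar>1 / f x - 1 / f y\<bar> = \<bar>f y - f x\<bar> / (f x * f y)"
      using assms(2) by (simp add: field_simps abs_div)
    also have "\<dots> \<le> \<bar>f y - f x\<bar> / c^2"
      using fx assms(2) by (intro divide_left_mono) (auto simp: power2_eq_square intro: mult_mono)
    also have "\<dots> \<le> (L1 * dist x y) / c^2"
      using h xy by (intro divide_right_mono) (auto simp: abs_minus_commute dist_commute)
    finally show "\<bar>1 / f x - 1 / f y\<bar> \<le> L1 / c\<^sup>2 * dist x y" by simp
  next
    fix x assume "x \<in> box4 R"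
    hence "f x \<ge> c" using assms by auto
    thus "\<bar>1 / f x\<bar> \<le> 1 / c" using assms(2) by (simp add: frac_le)
  qed (use h assms in auto)
qed

lemma nice_divide:
  assumes "nice R g" "nice R f" "c > 0" "\<forall>x\<in>box4 R. c \<le> f x"
  shows "nice R (\<lambda>x. g x / f x)"
  using nice_mult[OF assms(1) nice_inverse[OF assms(2-4)]] by simp




locale model =
  fixes p :: params
  assumes pos: "As p > 0" "Az p > 0" "E34 p > 0" "E200 p > 0" "ES p > 0" "EZ p > 0"
    "b34 p > 0" "bm34 p > 0" "b200 p > 0" "bm200 p > 0" "gs p > 0" "gz p > 0"
    "cs p > 0" "cms p > 0" "cz p > 0" "cmz p > 0"
    "bs p > 0" "bs1 p > 0" "bs2 p > 0" "bz p > 0" "bz1 p > 0" "bz2 p > 0"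
    "ks p > 0" "ks1 p > 0" "ks2 p > 0" "kms p > 0"
    "kz p > 0" "kz1 p > 0" "kz2 p > 0" "kmz p > 0" "dz p > 0"
  and ord_s: "bs p < bs1 p" "bs1 p < bs2 p"
  and ord_z: "bz p < bz1 p" "bz1 p < bz2 p"
  and ordk_s: "ks p > ks1 p" "ks1 p > ks2 p"
  and ordk_z: "kz p > kz1 p" "kz1 p > kz2 p"
begin

lemma G1: "G p x $ 1 = b34 p * E34 p * As p * Az p / (((x$2)\<^sup>2 + As p) * ((x$4)\<^sup>2 + Az p)) - bm34 p * x$1"
  by (simp add: G_def Let_def)
lemma G2: "G p x $ 2 = gs p * ES p * As p / ((x$2)\<^sup>2 + As p) * N_s p (x$1) - kms p * x$2"
  by (simp add: G_def Let_def)
lemma G3: "G p x $ 3 = b200 p * E200 p * As p * Az p / (((x$2)\<^sup>2 + As p) * ((x$4)\<^sup>2 + Az p)) - bm200 p * x$3"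
  by (simp add: G_def Let_def)
lemma G4: "G p x $ 4 = dz p + gz p * EZ p * (x$2)\<^sup>2 * (x$4)\<^sup>2 / (((x$2)\<^sup>2 + As p) * ((x$4)\<^sup>2 + Az p)) * N_z p (x$3) - kmz p * x$4"
  by (simp add: G_def Let_def)

lemma sigma_simps: "sigma$1 = -1" "sigma$2 = 1" "sigma$3 = -1" "sigma$4 = 1"
  by (simp_all add: sigma_def)

lemma Ns_pos: "0 \<le> \<mu> \<Longrightarrow> N_s p \<mu> > 0"
  unfolding N_s_def using pos by (intro Nf_pos) auto
lemma Nz_pos: "0 \<le> \<mu> \<Longrightarrow> N_z p \<mu> > 0"
  unfolding N_z_def using pos by (intro Nf_pos) auto
lemma Ns_strict: "0 \<le> \<mu> \<Longrightarrow> \<mu> < \<nu> \<Longrightarrow> N_s p \<nu> < N_s p \<mu>"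
  unfolding N_s_def using pos ord_s ordk_s by (intro Nf_strict_anti) auto
lemma Nz_strict: "0 \<le> \<mu> \<Longrightarrow> \<mu> < \<nu> \<Longrightarrow> N_z p \<nu> < N_z p \<mu>"
  unfolding N_z_def using pos ord_z ordk_z by (intro Nf_strict_anti) auto
lemma Ns_anti: "0 \<le> \<mu> \<Longrightarrow> \<mu> \<le> \<nu> \<Longrightarrow> N_s p \<nu> \<le> N_s p \<mu>"
  using Ns_strict by (cases "\<mu> = \<nu>") (auto simp: less_eq_real_def)
lemma Nz_anti: "0 \<le> \<mu> \<Longrightarrow> \<mu> \<le> \<nu> \<Longrightarrow> N_z p \<nu> \<le> N_z p \<mu>"
  using Nz_strict by (cases "\<mu> = \<nu>") (auto simp: less_eq_real_def)

lemma nice_Nf_nth: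
  assumes "c > 0" "cm > 0" "b > 0" "b1 > 0" "b2 > 0"
  shows "nice R (\<lambda>x. Nf k k1 k2 c cm b b1 b2 (x$j))"
proof -
  have e1: "e_1 cm b1 b2 * b > 0" using assms e1_pos by simp
  have e3: "e_3 cm b b1 b2 \<ge> 0" using assms unfolding e_3_def by simp
  show ?thesis unfolding Nf_def
  proof (rule nice_divide[where c = "e_1 cm b1 b2 * b"])
    show "nice R (\<lambda>x. k * (b2 * c * x $ j + e_1 cm b1 b2) + k1 * e_2 c cm b2 * x $ j + k2 * c\<^sup>2 * (x $ j)\<^sup>2)"
      by (intro nice_add nice_mult nice_const nice_nth nice_power)
    show "nice R (\<lambda>x. Delta c cm b b1 b2 (x $ j))" unfolding Delta_def
      by (intro nice_add nice_mult nice_const nice_nth nice_power)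
    show "\<forall>x\<in>box4 R. e_1 cm b1 b2 * b \<le> Delta c cm b b1 b2 (x $ j)"
      unfolding Delta_def box4_def using assms e3
      by (auto intro!: add_nonneg_nonneg mult_nonneg_nonneg)
  qed (use e1 in auto)
qed

lemma nice_G: "nice R (\<lambda>x. G p x $ i)"
proof -
  have d: "\<forall>x\<in>box4 R. As p * Az p \<le> ((x$2)\<^sup>2 + As p) * ((x$4)\<^sup>2 + Az p)"
    using pos by (auto intro!: mult_mono)
  have d2: "\<forall>x\<in>box4 R. As p \<le> (x$2)\<^sup>2 + As p" by auto
  have A: "As p * Az p > 0" using pos by simp
  have n1: "nice R (\<lambda>x. G p x $ 1)" unfolding G1
    by (intro nice_diff nice_mult nice_const nice_nth nice_divide[OF _ _ A d]
        nice_add nice_power)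
  have n3: "nice R (\<lambda>x. G p x $ 3)" unfolding G3
    by (intro nice_diff nice_mult nice_const nice_nth nice_divide[OF _ _ A d]
        nice_add nice_power)
  have ns: "nice R (\<lambda>x. N_s p (x$1))" unfolding N_s_def using pos by (intro nice_Nf_nth) auto
  have nz: "nice R (\<lambda>x. N_z p (x$3))" unfolding N_z_def using pos by (intro nice_Nf_nth) auto
  have n2: "nice R (\<lambda>x. G p x $ 2)" unfolding G2
    by (intro nice_diff nice_mult nice_const nice_nth nice_divide[OF _ _ pos(1) d2] ns
        nice_add nice_power)
  have n4: "nice R (\<lambda>x. G p x $ 4)" unfolding G4
    by (intro nice_diff nice_mult nice_const nice_nth nice_divide[OF _ _ A d] nz
        nice_add nice_power)
  show ?thesis using n1 n2 n3 n4 exhaust_4[of i] by auto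
qed

end



lemma den_mono:
  fixes a a' b b' A B :: real
  assumes "0 \<le> a" "a \<le> a'" "0 \<le> b" "b \<le> b'" "A > 0" "B > 0"
  shows "(a\<^sup>2 + A) * (b\<^sup>2 + B) \<le> (a'\<^sup>2 + A) * (b'\<^sup>2 + B)"
  using assms by (intro mult_mono add_mono power_mono) auto

lemma den_strict:
  fixes a a' b b' A B :: real
  assumes "0 \<le> a" "a \<le> a'" "0 \<le> b" "b \<le> b'" "A > 0" "B > 0" "a < a' \<or> b < b'"
  shows "(a\<^sup>2 + A) * (b\<^sup>2 + B) < (a'\<^sup>2 + A) * (b'\<^sup>2 + B)"
proof (cases "a < a'")
  case True
  have "0 < b\<^sup>2 + B" using assms(6) by (intro add_nonneg_pos) auto
  have "a\<^sup>2 < a'\<^sup>2" using assms True by (intro power_strict_mono) auto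
  thus ?thesis using assms \<open>0 < b\<^sup>2 + B\<close> by (intro mult_less_le_imp_less add_strict_right_mono add_mono power_mono) 
     (auto intro: add_pos_nonneg)
next
  case False
  have "0 < a'\<^sup>2 + A" "0 < a\<^sup>2 + A" using assms(5) by (intro add_nonneg_pos; auto)+
  have "b < b'" using assms False by auto
  hence "b\<^sup>2 < b'\<^sup>2" using assms by (intro power_strict_mono) auto
  thus ?thesis using assms \<open>0 < a'\<^sup>2 + A\<close> \<open>0 < a\<^sup>2 + A\<close> by (intro mult_le_less_imp_less add_strict_right_mono add_mono power_mono)
     (auto intro: add_pos_nonneg)
qed

lemma sq_frac_mono:
  fixes a a' A :: real
  assumes "0 \<le> a" "a \<le> a'" "A > 0"
  shows "a\<^sup>2 / (a\<^sup>2 + A) \<le> a'\<^sup>2 / (a'\<^sup>2 + A)"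
proof -
  have "a\<^sup>2 \<le> a'\<^sup>2" using assms by (intro power_mono) auto
  hence "a\<^sup>2 * (a'\<^sup>2 + A) \<le> a'\<^sup>2 * (a\<^sup>2 + A)" using assms by (simp add: algebra_simps)
  moreover have "0 < a\<^sup>2 + A" "0 < a'\<^sup>2 + A" using assms by (auto intro: add_nonneg_pos)
  ultimately show ?thesis by (simp add: divide_simps)
qed

context model begin

lemma q_mono:
  assumes "0 \<le> a" "a \<le> a'" "0 \<le> z"
  shows "gz p * EZ p * a\<^sup>2 * z\<^sup>2 / ((a\<^sup>2 + As p) * (z\<^sup>2 + Az p))
      \<le> gz p * EZ p * a'\<^sup>2 * z\<^sup>2 / ((a'\<^sup>2 + As p) * (z\<^sup>2 + Az p))"
proof -
  have eq: "\<And>a. gz p * EZ p * a\<^sup>2 * z\<^sup>2 / ((a\<^sup>2 + As p) * (z\<^sup>2 + Az p))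
      = (gz p * EZ p * z\<^sup>2 / (z\<^sup>2 + Az p)) * (a\<^sup>2 / (a\<^sup>2 + As p))"
    by (simp add: field_simps)
  show ?thesis unfolding eq using pos assms
    by (intro mult_left_mono sq_frac_mono) auto
qed

lemma q_nonneg: "0 \<le> gz p * EZ p * a\<^sup>2 * z\<^sup>2 / ((a\<^sup>2 + As p) * (z\<^sup>2 + Az p))"
  using pos by (intro divide_nonneg_nonneg mult_nonneg_nonneg) (auto intro: add_nonneg_nonneg)

lemma q_pos: "a > 0 \<Longrightarrow> z > 0 \<Longrightarrow> 0 < gz p * EZ p * a\<^sup>2 * z\<^sup>2 / ((a\<^sup>2 + As p) * (z\<^sup>2 + Az p))"
  using pos by (intro divide_pos_pos mult_pos_pos) (auto intro: add_pos_pos)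

lemma coop:
  assumes x: "\<forall>j. 0 \<le> x$j" and y: "\<forall>j. 0 \<le> y$j" and eqi: "x$i = y$i"
    and o: "\<forall>j. 0 \<le> sigma$j * (x$j - y$j)"
  shows "0 \<le> sigma$i * (G p x $ i - G p y $ i)"
proof -
  have h1: "x$1 \<le> y$1" using o[rule_format, of 1] by (simp add: sigma_simps)
  have h2: "y$2 \<le> x$2" using o[rule_format, of 2] by (simp add: sigma_simps)
  have h3: "x$3 \<le> y$3" using o[rule_format, of 3] by (simp add: sigma_simps)
  have h4: "y$4 \<le> x$4" using o[rule_format, of 4] by (simp add: sigma_simps)
  have den: "((y$2)\<^sup>2 + As p) * ((y$4)\<^sup>2 + Az p) \<le> ((x$2)\<^sup>2 + As p) * ((x$4)\<^sup>2 + Az p)"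
    using x y h2 h4 pos by (intro den_mono) auto
  have dpos: "0 < ((y$2)\<^sup>2 + As p) * ((y$4)\<^sup>2 + Az p)" using pos by (intro mult_pos_pos add_nonneg_pos) auto
  consider "i = 1" | "i = 2" | "i = 3" | "i = 4" using exhaust_4 by blast
  thus ?thesis
  proof cases
    case 1
    have "b34 p * E34 p * As p * Az p / (((x$2)\<^sup>2 + As p) * ((x$4)\<^sup>2 + Az p))
       \<le> b34 p * E34 p * As p * Az p / (((y$2)\<^sup>2 + As p) * ((y$4)\<^sup>2 + Az p))"
      using den dpos pos by (intro divide_left_mono) auto
    thus ?thesis using 1 eqi by (simp add: G1 sigma_simps)
  next
    case 2
    have "N_s p (y$1) \<le> N_s p (x$1)" using Ns_anti h1 x by auto
    hence "gs p * ES p * As p / ((x$2)\<^sup>2 + As p) * N_s p (y$1) \<le> gs p * ES p * As p / ((x$2)\<^sup>2 + As p) * N_s p (x$1)"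
      using pos by (intro mult_left_mono) (auto intro: add_nonneg_pos)
    thus ?thesis using 2 eqi by (simp add: G2 sigma_simps)
  next
    case 3
    have "b200 p * E200 p * As p * Az p / (((x$2)\<^sup>2 + As p) * ((x$4)\<^sup>2 + Az p))
       \<le> b200 p * E200 p * As p * Az p / (((y$2)\<^sup>2 + As p) * ((y$4)\<^sup>2 + Az p))"
      using den dpos pos by (intro divide_left_mono) auto
    thus ?thesis using 3 eqi by (simp add: G3 sigma_simps)
  next
    case 4
    have "N_z p (y$3) \<le> N_z p (x$3)" using Nz_anti h3 x by auto
    moreover have "0 \<le> N_z p (y$3)" using Nz_pos y by (simp add: less_imp_le)
    moreover have "gz p * EZ p * (y$2)\<^sup>2 * (x$4)\<^sup>2 / (((y$2)\<^sup>2 + As p) * ((x$4)\<^sup>2 + Az p))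
       \<le> gz p * EZ p * (x$2)\<^sup>2 * (x$4)\<^sup>2 / (((x$2)\<^sup>2 + As p) * ((x$4)\<^sup>2 + Az p))"
      using q_mono h2 x y by auto
    ultimately have "gz p * EZ p * (y$2)\<^sup>2 * (x$4)\<^sup>2 / (((y$2)\<^sup>2 + As p) * ((x$4)\<^sup>2 + Az p)) * N_z p (y$3)
       \<le> gz p * EZ p * (x$2)\<^sup>2 * (x$4)\<^sup>2 / (((x$2)\<^sup>2 + As p) * ((x$4)\<^sup>2 + Az p)) * N_z p (x$3)"
      using q_nonneg by (intro mult_mono) auto
    thus ?thesis using 4 eqi by (simp add: G4 sigma_simps)
  qed
qed

lemma scoop:
  assumes x: "\<forall>j. 0 < x$j" and y: "\<forall>j. 0 < y$j" and eqi: "x$i = y$i"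
    and o: "\<forall>j. 0 \<le> sigma$j * (x$j - y$j)"
    and s: "0 < sigma$(i-1) * (x$(i-1) - y$(i-1))"
  shows "0 < sigma$i * (G p x $ i - G p y $ i)"
proof -
  have x': "\<forall>j. 0 \<le> x$j" and y': "\<forall>j. 0 \<le> y$j" using x y less_imp_le by auto
  have h1: "x$1 \<le> y$1" using o[rule_format, of 1] by (simp add: sigma_simps)
  have h2: "y$2 \<le> x$2" using o[rule_format, of 2] by (simp add: sigma_simps)
  have h3: "x$3 \<le> y$3" using o[rule_format, of 3] by (simp add: sigma_simps)
  have h4: "y$4 \<le> x$4" using o[rule_format, of 4] by (simp add: sigma_simps)
  have dpos: "0 < ((y$2)\<^sup>2 + As p) * ((y$4)\<^sup>2 + Az p)" using pos by (intro mult_pos_pos add_nonneg_pos) auto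
  consider "i = 1" | "i = 2" | "i = 3" | "i = 4" using exhaust_4 by blast
  thus ?thesis
  proof cases
    case 1
    have e: "(1::4) - 1 = 4" by simp
    hence "y$4 < x$4" using s 1 by (simp only: e) (simp add: sigma_simps)
    hence den: "((y$2)\<^sup>2 + As p) * ((y$4)\<^sup>2 + Az p) < ((x$2)\<^sup>2 + As p) * ((x$4)\<^sup>2 + Az p)"
      using x' y' h2 h4 pos by (intro den_strict) auto
    have "b34 p * E34 p * As p * Az p / (((x$2)\<^sup>2 + As p) * ((x$4)\<^sup>2 + Az p))
       < b34 p * E34 p * As p * Az p / (((y$2)\<^sup>2 + As p) * ((y$4)\<^sup>2 + Az p))"
      using den dpos pos by (intro divide_strict_left_mono) auto
    thus ?thesis using 1 eqi by (simp add: G1 sigma_simps)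
  next
    case 2
    hence "x$1 < y$1" using s by (simp add: sigma_simps)
    hence "N_s p (y$1) < N_s p (x$1)" using Ns_strict x' by auto
    hence "gs p * ES p * As p / ((x$2)\<^sup>2 + As p) * N_s p (y$1) < gs p * ES p * As p / ((x$2)\<^sup>2 + As p) * N_s p (x$1)"
      using pos by (intro mult_strict_left_mono divide_pos_pos mult_pos_pos add_nonneg_pos) auto
    thus ?thesis using 2 eqi by (simp add: G2 sigma_simps)
  next
    case 3
    hence "y$2 < x$2" using s by (simp add: sigma_simps)
    hence den: "((y$2)\<^sup>2 + As p) * ((y$4)\<^sup>2 + Az p) < ((x$2)\<^sup>2 + As p) * ((x$4)\<^sup>2 + Az p)"
      using x' y' h2 h4 pos by (intro den_strict) auto
    have "b200 p * E200 p * As p * Az p / (((x$2)\<^sup>2 + As p) * ((x$4)\<^sup>2 + Az p))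
       < b200 p * E200 p * As p * Az p / (((y$2)\<^sup>2 + As p) * ((y$4)\<^sup>2 + Az p))"
      using den dpos pos by (intro divide_strict_left_mono) auto
    thus ?thesis using 3 eqi by (simp add: G3 sigma_simps)
  next
    case 4
    hence "x$3 < y$3" using s by (simp add: sigma_simps)
    hence "N_z p (y$3) < N_z p (x$3)" using Nz_strict x' by auto
    moreover have qp: "0 < gz p * EZ p * (y$2)\<^sup>2 * (x$4)\<^sup>2 / (((y$2)\<^sup>2 + As p) * ((x$4)\<^sup>2 + Az p))"
      using q_pos x y by auto
    moreover have "gz p * EZ p * (y$2)\<^sup>2 * (x$4)\<^sup>2 / (((y$2)\<^sup>2 + As p) * ((x$4)\<^sup>2 + Az p))
       \<le> gz p * EZ p * (x$2)\<^sup>2 * (x$4)\<^sup>2 / (((x$2)\<^sup>2 + As p) * ((x$4)\<^sup>2 + Az p))"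
      using q_mono h2 x' y' by auto
    moreover have "0 < N_z p (x$3)" using Nz_pos x' by simp
    ultimately have "gz p * EZ p * (y$2)\<^sup>2 * (x$4)\<^sup>2 / (((y$2)\<^sup>2 + As p) * ((x$4)\<^sup>2 + Az p)) * N_z p (y$3)
       < gz p * EZ p * (x$2)\<^sup>2 * (x$4)\<^sup>2 / (((x$2)\<^sup>2 + As p) * ((x$4)\<^sup>2 + Az p)) * N_z p (x$3)"
      by (meson mult_strict_left_mono mult_right_mono less_le_trans less_imp_le)
    thus ?thesis using 4 eqi by (simp add: G4 sigma_simps)
  qed
qed

end



lemma psi_deriv: "((\<lambda>x::real. (min 0 x)^2) has_real_derivative 2 * min 0 x) (at x)"
proof -
  consider "x < 0" | "x > 0" | "x = 0" by linarith
  thus ?thesis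
  proof cases
    case 1
    have "((\<lambda>x::real. x^2) has_real_derivative 2 * x) (at x)"
      by (auto intro!: derivative_eq_intros)
    hence "((\<lambda>x::real. (min 0 x)^2) has_real_derivative 2 * x) (at x)"
      by (rule has_field_derivative_transform_within_open[of _ _ _ "{..<0}"]) (use 1 in auto)
    thus ?thesis using 1 by simp
  next
    case 2
    have "((\<lambda>x::real. 0) has_real_derivative 0) (at x)"
      by (auto intro!: derivative_eq_intros)
    hence "((\<lambda>x::real. (min 0 x)^2) has_real_derivative 0) (at x)"
      by (rule has_field_derivative_transform_within_open[of _ _ _ "{0<..}"]) (use 2 in auto)
    thus ?thesis using 2 by simp
  next
    case 3
    have "((\<lambda>y. ((min 0 y)^2 - (min 0 0)^2) / (y - 0)) \<longlongrightarrow> (0::real)) (at 0)"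
    proof (rule Lim_null_comparison)
      show "\<forall>\<^sub>F y in at 0. norm (((min 0 y)^2 - (min 0 0)^2) / (y - 0)) \<le> \<bar>y - 0\<bar>"
        by (intro always_eventually allI)
           (auto simp: abs_div power2_eq_square abs_mult min_def divide_simps)
      show "((\<lambda>y. \<bar>y - 0\<bar>) \<longlongrightarrow> (0::real)) (at 0)"
        by (auto intro!: tendsto_eq_intros)
    qed
    thus ?thesis using 3 by (simp add: has_field_derivative_iff)
  qed
qed

lemma exp_lower:
  fixes u u' :: "real \<Rightarrow> real"
  assumes der: "\<And>x. x\<in>{lo..hi} \<Longrightarrow> (u has_real_derivative u' x) (at x within {lo..hi})"
    and bd: "\<And>x. x\<in>{a0..\<tau>} \<Longrightarrow> u' x \<ge> -c * u x"
    and "lo \<le> a0" "a0 \<le> \<tau>" "\<tau> \<le> hi"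
  shows "exp(-c*(\<tau>-a0)) * u a0 \<le> u \<tau>"
proof -
  define v where "v x = exp(c*(x-a0)) * u x" for x
  have cu: "continuous_on {lo..hi} u"
    using der DERIV_continuous continuous_on_eq_continuous_within by blast
  have cv: "continuous_on {a0..\<tau>} v" unfolding v_def
    by (intro continuous_intros continuous_on_subset[OF cu]) (use assms in auto)
  have "v a0 \<le> v \<tau>"
  proof (rule DERIV_nonneg_imp_increasing_open[OF \<open>a0 \<le> \<tau>\<close> _ cv])
    fix x assume x: "a0 < x" "x < \<tau>"
    have "(u has_real_derivative u' x) (at x)"
      using der[of x] x assms by (auto simp: at_within_Icc_at)
    hence "(v has_real_derivative exp(c*(x-a0)) * (c * u x + u' x)) (at x)"
      unfolding v_def by (auto intro!: derivative_eq_intros simp: algebra_simps)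
    moreover have "exp(c*(x-a0)) * (c * u x + u' x) \<ge> 0"
      using bd[of x] x by (intro mult_nonneg_nonneg) auto
    ultimately show "\<exists>y. (v has_real_derivative y) (at x) \<and> 0 \<le> y" by blast
  qed
  hence "u a0 \<le> exp(c*(\<tau>-a0)) * u \<tau>" by (simp add: v_def)
  hence "exp(-c*(\<tau>-a0)) * u a0 \<le> exp(-c*(\<tau>-a0)) * (exp(c*(\<tau>-a0)) * u \<tau>)"
    by (intro mult_left_mono) auto
  also have "\<dots> = u \<tau>" by (simp add: mult.assoc[symmetric] exp_add[symmetric])
  finally show ?thesis .
qed

lemma comp_deriv:
  assumes "(y has_vector_derivative v) (at \<tau> within S)"
  shows "((\<lambda>\<tau>. y \<tau> $ j) has_real_derivative v $ j) (at \<tau> within S)"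
  using bounded_linear.has_vector_derivative[OF bounded_linear_vec_nth assms, of j]
  by (simp add: has_real_derivative_iff_has_vector_derivative)

lemma UNIV_4: "(UNIV :: 4 set) = {1,2,3,4}"
  using exhaust_4 by auto

lemma sum4: "(\<Sum>j\<in>(UNIV::4 set). f j) = f 1 + f 2 + f 3 + f (4::4)"
  by (subst UNIV_4) (simp add: add.assoc)

lemma sigma_sq: "sigma$j * sigma$j = 1"
  by (simp add: sigma_def)

lemma sigma_abs: "\<bar>sigma$j\<bar> = 1"
  by (simp add: sigma_def)




context model begin

lemma traj_pos:
  assumes d: "\<forall>\<tau>\<in>{0..t}. (y has_vector_derivative G p (y \<tau>)) (at \<tau> within {0..t})"
    and y0: "y 0 \<in> open_orthant"
  shows "\<forall>\<tau>\<in>{0..t}. \<forall>j. 0 < y \<tau> $ j"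
proof -
  have dj: "\<And>j \<tau>. \<tau>\<in>{0..t} \<Longrightarrow> ((\<lambda>\<tau>. y \<tau> $ j) has_real_derivative G p (y \<tau>) $ j) (at \<tau> within {0..t})"
    using d comp_deriv by blast
  have y0j: "\<And>j. 0 < y 0 $ j" using y0 by (simp add: open_orthant_def)
  have gen: "0 < y \<tau> $ j" if h: "\<And>x. x\<in>{0..\<tau>} \<Longrightarrow> G p (y x) $ j \<ge> -c * y x $ j" and \<tau>: "\<tau>\<in>{0..t}" for j c \<tau>
  proof -
    have "exp(-c*(\<tau>-0)) * y 0 $ j \<le> y \<tau> $ j"
      by (rule exp_lower[where u="\<lambda>\<tau>. y \<tau> $ j" and u'="\<lambda>\<tau>. G p (y \<tau>) $ j" and lo=0 and hi=t])
        (use dj h \<tau> in auto)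
    moreover have "0 < exp(-c*(\<tau>-0)) * y 0 $ j" using y0j by simp
    ultimately show "0 < y \<tau> $ j" by linarith
  qed
  have p1: "0 < y \<tau> $ 1" if "\<tau>\<in>{0..t}" for \<tau>
  proof (rule gen[OF _ that, where j=1 and c="bm34 p"])
    fix x :: real
    have "0 \<le> b34 p * E34 p * As p * Az p / (((y x $ 2)\<^sup>2 + As p) * ((y x $ 4)\<^sup>2 + Az p))"
      using pos by (intro divide_nonneg_nonneg mult_nonneg_nonneg add_nonneg_nonneg) auto
    thus "G p (y x) $ 1 \<ge> - bm34 p * y x $ 1" by (simp add: G1)
  qed
  have p3: "0 < y \<tau> $ 3" if "\<tau>\<in>{0..t}" for \<tau>
  proof (rule gen[OF _ that, where j=3 and c="bm200 p"])
    fix x :: real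
    have "0 \<le> b200 p * E200 p * As p * Az p / (((y x $ 2)\<^sup>2 + As p) * ((y x $ 4)\<^sup>2 + Az p))"
      using pos by (intro divide_nonneg_nonneg mult_nonneg_nonneg add_nonneg_nonneg) auto
    thus "G p (y x) $ 3 \<ge> - bm200 p * y x $ 3" by (simp add: G3)
  qed
  have p2: "0 < y \<tau> $ 2" if \<tau>: "\<tau>\<in>{0..t}" for \<tau>
  proof (rule gen[OF _ that, where j=2 and c="kms p"])
    fix x :: real assume "x \<in> {0..\<tau>}"
    hence "0 < y x $ 1" using p1 \<tau> by auto
    hence "0 \<le> N_s p (y x $ 1)" using Ns_pos[of "y x $ 1"] by simp
    hence "0 \<le> gs p * ES p * As p / ((y x $ 2)\<^sup>2 + As p) * N_s p (y x $ 1)"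
      using pos by (intro divide_nonneg_nonneg mult_nonneg_nonneg add_nonneg_nonneg) auto
    thus "G p (y x) $ 2 \<ge> - kms p * y x $ 2" by (simp add: G2)
  qed
  have p4: "0 < y \<tau> $ 4" if \<tau>: "\<tau>\<in>{0..t}" for \<tau>
  proof (rule gen[OF _ that, where j=4 and c="kmz p"])
    fix x :: real assume "x \<in> {0..\<tau>}"
    hence "0 < y x $ 3" using p3 \<tau> by auto
    hence "0 \<le> N_z p (y x $ 3)" using Nz_pos[of "y x $ 3"] by simp
    hence "0 \<le> gz p * EZ p * (y x $ 2)\<^sup>2 * (y x $ 4)\<^sup>2 / (((y x $ 2)\<^sup>2 + As p) * ((y x $ 4)\<^sup>2 + Az p)) * N_z p (y x $ 3)"
      using q_nonneg by (intro mult_nonneg_nonneg) auto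
    thus "G p (y x) $ 4 \<ge> - kmz p * y x $ 4" using pos by (simp add: G4)
  qed
  show ?thesis
  proof (intro ballI allI)
    fix \<tau> j assume "\<tau> \<in> {0..t}"
    thus "0 < y \<tau> $ j" using p1 p2 p3 p4 exhaust_4[of j] by auto
  qed
qed

lemma lipG: "\<exists>L\<ge>0. \<forall>i. \<forall>x\<in>box4 R. \<forall>y\<in>box4 R. \<bar>G p x $ i - G p y $ i\<bar> \<le> L * dist x y"
proof -
  have ex: "\<forall>i. \<exists>L. 0 \<le> L \<and> (\<forall>x\<in>box4 R. \<forall>y\<in>box4 R. \<bar>G p x $ i - G p y $ i\<bar> \<le> L * dist x y)"
  proof
    fix i
    have "nice R (\<lambda>x. G p x $ i)" by (rule nice_G)
    thus "\<exists>L. 0 \<le> L \<and> (\<forall>x\<in>box4 R. \<forall>y\<in>box4 R. \<bar>G p x $ i - G p y $ i\<bar> \<le> L * dist x y)"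
      unfolding nice_def by blast
  qed
  obtain Lf where Lf0: "\<forall>i. 0 \<le> Lf i \<and> (\<forall>x\<in>box4 R. \<forall>y\<in>box4 R. \<bar>G p x $ i - G p y $ i\<bar> \<le> Lf i * dist x y)"
    using choice[OF ex] by blast
  have Lf: "\<And>i. 0 \<le> Lf i" "\<And>i x y. x\<in>box4 R \<Longrightarrow> y\<in>box4 R \<Longrightarrow> \<bar>G p x $ i - G p y $ i\<bar> \<le> Lf i * dist x y"
    using Lf0 by auto
  define L where "L = (\<Sum>i\<in>UNIV. Lf i)"
  have "\<And>i. Lf i \<le> L" unfolding L_def using Lf(1) by (intro member_le_sum) auto
  hence "\<forall>i. \<forall>x\<in>box4 R. \<forall>y\<in>box4 R. \<bar>G p x $ i - G p y $ i\<bar> \<le> L * dist x y"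
  proof (intro allI ballI)
    fix i x y assume "x \<in> box4 R" "y \<in> box4 R"
    hence "\<bar>G p x $ i - G p y $ i\<bar> \<le> Lf i * dist x y" using Lf(2) by blast
    also have "\<dots> \<le> L * dist x y" using \<open>Lf i \<le> L\<close> by (intro mult_right_mono) auto
    finally show "\<bar>G p x $ i - G p y $ i\<bar> \<le> L * dist x y" .
  qed
  moreover have "0 \<le> L" unfolding L_def using Lf(1) by (simp add: sum_nonneg)
  ultimately show ?thesis by blast
qed

end



context model begin

lemma main:
  assumes t: "t > 0"
  and d1: "\<forall>\<tau>\<in>{0..t}. (y1 has_vector_derivative G p (y1 \<tau>)) (at \<tau> within {0..t})"
  and d2: "\<forall>\<tau>\<in>{0..t}. (y2 has_vector_derivative G p (y2 \<tau>)) (at \<tau> within {0..t})"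
  and o1: "y1 0 \<in> open_orthant" and o2: "y2 0 \<in> open_orthant"
  and c0: "y1 0 - y2 0 \<in> C_sigma" and ne: "y1 0 \<noteq> y2 0"
  shows "y1 t - y2 t \<in> interior C_sigma"
proof -
  define w where "w \<tau> j = sigma$j * (y1 \<tau> $ j - y2 \<tau> $ j)" for \<tau> j
  define w' where "w' \<tau> j = sigma$j * (G p (y1 \<tau>) $ j - G p (y2 \<tau>) $ j)" for \<tau> j
  define ng where "ng v = - min 0 (v::real)" for v
  have ng0: "\<And>v. 0 \<le> ng v" by (simp add: ng_def)
  have dw: "((\<lambda>\<tau>. w \<tau> j) has_real_derivative w' \<tau> j) (at \<tau> within {0..t})" if "\<tau>\<in>{0..t}" for \<tau> j
    unfolding w_def w'_def
    using comp_deriv[OF d1[rule_format, OF that], of j] comp_deriv[OF d2[rule_format, OF that], of j]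
    by (auto intro!: derivative_eq_intros)
  have pos1: "\<And>\<tau> j. \<tau>\<in>{0..t} \<Longrightarrow> 0 < y1 \<tau> $ j" using traj_pos[OF d1 o1] by blast
  have pos2: "\<And>\<tau> j. \<tau>\<in>{0..t} \<Longrightarrow> 0 < y2 \<tau> $ j" using traj_pos[OF d2 o2] by blast
  have cont1: "continuous_on {0..t} y1"
    using d1 has_vector_derivative_continuous continuous_on_eq_continuous_within by blast
  have cont2: "continuous_on {0..t} y2"
    using d2 has_vector_derivative_continuous continuous_on_eq_continuous_within by blast
  obtain B1 where B1: "\<And>\<tau>. \<tau>\<in>{0..t} \<Longrightarrow> norm (y1 \<tau>) \<le> B1"
    using compact_imp_bounded[OF compact_continuous_image[OF cont1 compact_Icc]]
    unfolding bounded_iff by blast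
  obtain B2 where B2: "\<And>\<tau>. \<tau>\<in>{0..t} \<Longrightarrow> norm (y2 \<tau>) \<le> B2"
    using compact_imp_bounded[OF compact_continuous_image[OF cont2 compact_Icc]]
    unfolding bounded_iff by blast
  define R where "R = max B1 B2"
  have box1: "y1 \<tau> \<in> box4 R" if "\<tau>\<in>{0..t}" for \<tau>
    unfolding box4_def R_def using pos1[OF that] B1[OF that] component_le_norm_cart[of "y1 \<tau>"]
    by (smt (verit, best) mem_Collect_eq)
  have box2: "y2 \<tau> \<in> box4 R" if "\<tau>\<in>{0..t}" for \<tau>
    unfolding box4_def R_def using pos2[OF that] B2[OF that] component_le_norm_cart[of "y2 \<tau>"]
    by (smt (verit, best) mem_Collect_eq)
  obtain L where L0: "0 \<le> L" and L: "\<And>i x y. x\<in>box4 R \<Longrightarrow> y\<in>box4 R \<Longrightarrow> \<bar>G p x $ i - G p y $ i\<bar> \<le> L * dist x y"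
    using lipG[of R] by blast
  have est: "w' \<tau> i \<ge> -L * (\<bar>w \<tau> i\<bar> + (\<Sum>j\<in>UNIV. ng (w \<tau> j)))" if \<tau>: "\<tau>\<in>{0..t}" for \<tau> i
  proof -
    define P where "P = (\<chi> j. if j \<noteq> i \<and> w \<tau> j \<ge> 0 then y1 \<tau> $ j else y2 \<tau> $ j)"
    have Pj: "\<And>j. P$j = (if j \<noteq> i \<and> w \<tau> j \<ge> 0 then y1 \<tau> $ j else y2 \<tau> $ j)" by (simp add: P_def)
    have Pbox: "P \<in> box4 R" using box1[OF \<tau>] box2[OF \<tau>] unfolding box4_def by (auto simp: Pj)
    have cp: "0 \<le> sigma$i * (G p P $ i - G p (y2 \<tau>) $ i)"
    proof (rule coop)
      show "\<forall>j. 0 \<le> P $ j" using pos1[OF \<tau>] pos2[OF \<tau>] by (auto simp: Pj less_imp_le)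
      show "\<forall>j. 0 \<le> y2 \<tau> $ j" using pos2[OF \<tau>] by (auto simp: less_imp_le)
      show "P $ i = y2 \<tau> $ i" by (simp add: Pj)
      show "\<forall>j. 0 \<le> sigma $ j * (P $ j - y2 \<tau> $ j)" by (auto simp: Pj w_def)
    qed
    have l1: "\<bar>G p (y1 \<tau>) $ i - G p P $ i\<bar> \<le> L * dist (y1 \<tau>) P" using L box1[OF \<tau>] Pbox by blast
    have "dist (y1 \<tau>) P \<le> (\<Sum>j\<in>UNIV. \<bar>(y1 \<tau> - P) $ j\<bar>)" using norm_le_l1_cart[of "y1 \<tau> - P"] by (simp add: dist_norm)
    also have "\<dots> \<le> (\<Sum>j\<in>UNIV. (if j = i then \<bar>w \<tau> i\<bar> else 0) + ng (w \<tau> j))"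
    proof (rule sum_mono)
      fix j :: 4
      have aw: "\<bar>y1 \<tau> $ j - y2 \<tau> $ j\<bar> = \<bar>w \<tau> j\<bar>" by (simp add: w_def abs_mult sigma_abs)
      show "\<bar>(y1 \<tau> - P) $ j\<bar> \<le> (if j = i then \<bar>w \<tau> i\<bar> else 0) + ng (w \<tau> j)"
        using aw ng0[of "w \<tau> j"] by (auto simp: Pj ng_def)
    qed
    also have "\<dots> = \<bar>w \<tau> i\<bar> + (\<Sum>j\<in>UNIV. ng (w \<tau> j))" by (simp add: sum.distrib)
    finally have "dist (y1 \<tau>) P \<le> \<bar>w \<tau> i\<bar> + (\<Sum>j\<in>UNIV. ng (w \<tau> j))" .
    hence l2: "\<bar>G p (y1 \<tau>) $ i - G p P $ i\<bar> \<le> L * (\<bar>w \<tau> i\<bar> + (\<Sum>j\<in>UNIV. ng (w \<tau> j)))"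
      using l1 L0 by (meson mult_left_mono order_trans)
    have "w' \<tau> i = sigma$i * (G p (y1 \<tau>) $ i - G p P $ i) + sigma$i * (G p P $ i - G p (y2 \<tau>) $ i)"
      by (simp add: w'_def algebra_simps)
    moreover have "sigma$i * (G p (y1 \<tau>) $ i - G p P $ i) \<ge> - \<bar>G p (y1 \<tau>) $ i - G p P $ i\<bar>"
      using abs_mult[of "sigma$i"] sigma_abs[of i] abs_ge_minus_self
      by (metis abs_ge_self abs_minus_cancel minus_le_iff mult_1)
    ultimately show ?thesis using cp l2 by linarith
  qed

  define V where "V \<tau> = (\<Sum>j\<in>UNIV. (min 0 (w \<tau> j))^2)" for \<tau>
  define V' where "V' \<tau> = (\<Sum>j\<in>UNIV. 2 * min 0 (w \<tau> j) * w' \<tau> j)" for \<tau>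
  have dV: "(V has_real_derivative V' \<tau>) (at \<tau> within {0..t})" if "\<tau>\<in>{0..t}" for \<tau>
    unfolding V_def V'_def
  proof (rule DERIV_sum)
    fix j :: 4
    show "((\<lambda>x. (min 0 (w x j))\<^sup>2) has_real_derivative 2 * min 0 (w \<tau> j) * w' \<tau> j) (at \<tau> within {0..t})"
      using DERIV_chain'[OF dw[OF that, of j] psi_deriv[of "w \<tau> j"]] by simp
  qed
  have V0: "\<And>\<tau>. 0 \<le> V \<tau>" unfolding V_def by (simp add: sum_nonneg)
  have dVb: "V' \<tau> \<le> 16 * L * V \<tau>" if \<tau>: "\<tau>\<in>{0..t}" for \<tau>
  proof -
    define S where "S = (\<Sum>j\<in>UNIV. ng (w \<tau> j))"
    have S0: "0 \<le> S" unfolding S_def by (simp add: sum_nonneg ng0)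
    have ngS: "\<And>j. ng (w \<tau> j) \<le> S" unfolding S_def by (rule member_le_sum) (auto simp: ng0)
    have trm: "2 * min 0 (w \<tau> j) * w' \<tau> j \<le> 4 * L * (ng (w \<tau> j) * S)" for j
    proof (cases "w \<tau> j < 0")
      case True
      have e: "w' \<tau> j \<ge> -L * (ng (w \<tau> j) + S)" using est[OF \<tau>, of j] True by (simp add: ng_def S_def)
      have "-L * (ng (w \<tau> j) + S) \<ge> -L * (2 * S)" using ngS[of j] L0 by (intro mult_left_mono_neg) auto
      hence "w' \<tau> j \<ge> -2 * L * S" using e by linarith
      hence "ng (w \<tau> j) * w' \<tau> j \<ge> ng (w \<tau> j) * (-2 * L * S)" using ng0 by (intro mult_left_mono) auto
      thus ?thesis using True by (simp add: ng_def algebra_simps)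
    next
      case False
      thus ?thesis using ng0 S0 L0 by (simp add: ng_def)
    qed
    have "V' \<tau> \<le> (\<Sum>j\<in>UNIV. 4 * L * (ng (w \<tau> j) * S))" unfolding V'_def by (rule sum_mono) (rule trm)
    also have "\<dots> = 4 * L * S^2" by (simp add: sum_distrib_left[symmetric] sum_distrib_right[symmetric] S_def power2_eq_square)
    also have "\<dots> \<le> 4 * L * (4 * V \<tau>)"
    proof (intro mult_left_mono)
      have sq: "\<And>v. (min 0 v)^2 = (ng v)^2" by (simp add: ng_def)
      define a where "a = ng (w \<tau> 1)" define b where "b = ng (w \<tau> 2)"
      define c where "c = ng (w \<tau> 3)" define e where "e = ng (w \<tau> 4)"
      have Seq: "S = a + b + c + e" unfolding S_def a_def b_def c_def e_def by (rule sum4)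
      moreover have "V \<tau> = a^2 + b^2 + c^2 + e^2" unfolding V_def a_def b_def c_def e_def sq by (rule sum4)
      ultimately have "4 * V \<tau> - S^2 = (a-b)^2+(a-c)^2+(a-e)^2+(b-c)^2+(b-e)^2+(c-e)^2"
        by (simp add: power2_eq_square algebra_simps)
      moreover have "0 \<le> (a-b)^2+(a-c)^2+(a-e)^2+(b-c)^2+(b-e)^2+(c-e)^2"
        by (intro add_nonneg_nonneg zero_le_power2)
      ultimately show "S^2 \<le> 4 * V \<tau>" by linarith
    qed (use L0 in auto)
    finally show ?thesis by simp
  qed
  have w00: "\<And>j. 0 \<le> w 0 j" using c0 by (simp add: C_sigma_def w_def)
  have Vz: "V 0 = 0" unfolding V_def using w00 by simp
  have nn: "0 \<le> w \<tau> j" if \<tau>: "\<tau>\<in>{0..t}" for \<tau> j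
  proof -
    have "exp(-(-16*L)*(\<tau>-0)) * (- V 0) \<le> - V \<tau>"
    proof (rule exp_lower[where u="\<lambda>\<tau>. - V \<tau>" and u'="\<lambda>\<tau>. - V' \<tau>" and lo=0 and hi=t])
      fix x assume "x \<in> {0..t}"
      thus "((\<lambda>\<tau>. - V \<tau>) has_real_derivative - V' x) (at x within {0..t})"
        using dV by (auto intro!: derivative_eq_intros)
    next
      fix x assume "x \<in> {0..\<tau>}"
      hence "x \<in> {0..t}" using \<tau> by auto
      thus "- (- 16 * L) * - V x \<le> - V' x" using dVb by simp
    qed (use \<tau> in auto)
    hence "V \<tau> = 0" using Vz V0[of \<tau>] by simp
    hence "(min 0 (w \<tau> j))^2 = 0" unfolding V_def
      by (subst (asm) sum_nonneg_eq_0_iff) auto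
    thus ?thesis by simp
  qed
  have persist: "0 < w \<tau> i" if "\<tau>0\<in>{0..t}" "0 < w \<tau>0 i" "\<tau>\<in>{\<tau>0..t}" for \<tau>0 \<tau> i
  proof -
    have "exp(-L*(\<tau>-\<tau>0)) * w \<tau>0 i \<le> w \<tau> i"
    proof (rule exp_lower[where u="\<lambda>\<tau>. w \<tau> i" and u'="\<lambda>\<tau>. w' \<tau> i" and lo=0 and hi=t])
      fix x assume "x \<in> {0..t}"
      thus "((\<lambda>\<tau>. w \<tau> i) has_real_derivative w' x i) (at x within {0..t})" using dw by blast
    next
      fix x assume "x \<in> {\<tau>0..\<tau>}"
      hence x: "x \<in> {0..t}" using that by auto
      have "(\<Sum>j\<in>UNIV. ng (w x j)) = 0" using nn[OF x] by (simp add: ng_def)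
      thus "- L * w x i \<le> w' x i" using est[OF x, of i] nn[OF x, of i] by simp
    qed (use that in auto)
    moreover have "0 < exp(-L*(\<tau>-\<tau>0)) * w \<tau>0 i" using that by simp
    ultimately show ?thesis by linarith
  qed
  have propag: "0 < w \<tau> i" if a: "0 \<le> a" "a < t" and h: "\<forall>\<tau>\<in>{a..t}. 0 < w \<tau> (i-1)"
      and \<tau>: "\<tau> \<in> {(a+t)/2..t}" for a i \<tau>
  proof (cases "\<exists>\<tau>1\<in>{a..(a+t)/2}. w \<tau>1 i \<noteq> 0")
    case True
    then obtain \<tau>1 where \<tau>1: "\<tau>1\<in>{a..(a+t)/2}" "w \<tau>1 i \<noteq> 0" by blast
    hence "0 < w \<tau>1 i" using nn[of \<tau>1 i] a by (auto simp: less_le)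
    thus ?thesis using persist[of \<tau>1 i \<tau>] \<tau>1 \<tau> a by auto
  next
    case False
    define m where "m = (a+t)/2"
    define c where "c = (a+m)/2"
    define d where "d = (m-a)/2"
    have cd: "0 < c" "c < t" "0 < d" "a < c" "c < m" using a by (auto simp: c_def m_def d_def field_simps)
    have z: "\<And>y. \<bar>c - y\<bar> < d \<Longrightarrow> w c i = w y i"
    proof -
      fix y assume "\<bar>c - y\<bar> < d"
      hence "c - d < y \<and> y < c + d" by (auto simp: abs_less_iff)
      moreover have "c - d = a" "c + d = m" by (simp_all add: c_def d_def field_simps)
      ultimately have "y \<in> {a..m}" "c \<in> {a..m}" using cd by auto
      thus "w c i = w y i" using False m_def by auto
    qed
    have "((\<lambda>\<tau>. w \<tau> i) has_real_derivative w' c i) (at c)"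
      using dw[of c i] cd by (auto simp: at_within_Icc_at)
    hence w'0: "w' c i = 0" using DERIV_local_const[OF _ cd(3)] z by blast
    have cI: "c \<in> {0..t}" using cd by auto
    have "0 < sigma$i * (G p (y1 c) $ i - G p (y2 c) $ i)"
    proof (rule scoop)
      show "\<forall>j. 0 < y1 c $ j" "\<forall>j. 0 < y2 c $ j" using pos1[OF cI] pos2[OF cI] by auto
      have "w c i = 0" using False cd m_def by auto
      hence "sigma$i * sigma$i * (y1 c $ i - y2 c $ i) = 0" by (simp add: w_def)
      thus "y1 c $ i = y2 c $ i" by (simp add: sigma_sq)
      show "\<forall>j. 0 \<le> sigma $ j * (y1 c $ j - y2 c $ j)" using nn[OF cI] by (simp add: w_def)
      show "0 < sigma $ (i - 1) * (y1 c $ (i - 1) - y2 c $ (i - 1))"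
        using h cd by (simp add: w_def)
    qed
    thus ?thesis using w'0 by (auto simp: w'_def)
  qed
  obtain i0 where "y1 0 $ i0 \<noteq> y2 0 $ i0" using ne by (auto simp: vec_eq_iff)
  hence "w 0 i0 \<noteq> 0" using sigma_sq[of i0] by (auto simp: w_def)
  hence wi0: "0 < w 0 i0" using w00[of i0] by (simp add: less_le)
  have A0: "\<forall>\<tau>\<in>{0..t}. 0 < w \<tau> i0" using persist[of 0 i0] wi0 t by auto
  have A1: "\<forall>\<tau>\<in>{(0+t)/2..t}. 0 < w \<tau> (i0+1)"
    using propag[of 0 "i0+1"] A0 t by auto
  have A2: "\<forall>\<tau>\<in>{((0+t)/2+t)/2..t}. 0 < w \<tau> (i0+2)"
    using propag[of "(0+t)/2" "i0+2"] A1 t by (auto simp: algebra_simps)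
  have A3: "\<forall>\<tau>\<in>{(((0+t)/2+t)/2+t)/2..t}. 0 < w \<tau> (i0+3)"
    using propag[of "((0+t)/2+t)/2" "i0+3"] A2 t by (auto simp: algebra_simps)
  have wt: "0 < w t i" for i
  proof -
    have "i = i0 + (i - i0)" by simp
    moreover have "i - i0 = 1 \<or> i - i0 = 2 \<or> i - i0 = 3 \<or> i - i0 = 4" using exhaust_4 by blast
    moreover have "(4::4) = 0" by simp
    ultimately have "i = i0 \<or> i = i0 + 1 \<or> i = i0 + 2 \<or> i = i0 + 3" by (metis add.right_neutral)
    thus ?thesis using A0 A1 A2 A3 t by auto
  qed
  define U where "U = (\<Inter>j\<in>UNIV. {x::real^4. 0 < sigma$j * x$j})"
  have "open U" unfolding U_def
    by (intro open_INT ballI open_Collect_less continuous_intros) auto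
  moreover have "U \<subseteq> C_sigma" unfolding U_def C_sigma_def by (auto intro: less_imp_le)
  ultimately have "U \<subseteq> interior C_sigma" by (rule interior_maximal[rotated])
  moreover have "y1 t - y2 t \<in> U" unfolding U_def using wt by (simp add: w_def)
  ultimately show ?thesis by blast
qed
end

theorem mainTheorem4:
  fixes p :: params
  assumes pos: "As p > 0" "Az p > 0" "E34 p > 0" "E200 p > 0" "ES p > 0" "EZ p > 0"
    "b34 p > 0" "bm34 p > 0" "b200 p > 0" "bm200 p > 0" "gs p > 0" "gz p > 0"
    "cs p > 0" "cms p > 0" "cz p > 0" "cmz p > 0"
    "bs p > 0" "bs1 p > 0" "bs2 p > 0" "bz p > 0" "bz1 p > 0" "bz2 p > 0"
    "ks p > 0" "ks1 p > 0" "ks2 p > 0" "kms p > 0"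
    "kz p > 0" "kz1 p > 0" "kz2 p > 0" "kmz p > 0" "dz p > 0"
  and ord_s: "bs p < bs1 p" "bs1 p < bs2 p"
  and ord_z: "bz p < bz1 p" "bz1 p < bz2 p"
  and ordk_s: "ks p > ks1 p" "ks1 p > ks2 p"
  and ordk_z: "kz p > kz1 p" "kz1 p > kz2 p"
  shows "\<forall>t > 0. \<forall>y1 y2 :: real \<Rightarrow> real^4.
      (\<forall>\<tau>\<in>{0..t}. (y1 has_vector_derivative G p (y1 \<tau>)) (at \<tau> within {0..t})) \<and>
      (\<forall>\<tau>\<in>{0..t}. (y2 has_vector_derivative G p (y2 \<tau>)) (at \<tau> within {0..t})) \<and>
      y1 0 \<in> open_orthant \<and> y2 0 \<in> open_orthant \<and>
      y1 0 - y2 0 \<in> C_sigma \<and> y1 0 \<noteq> y2 0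
      \<longrightarrow> y1 t - y2 t \<in> interior C_sigma"
proof -
  interpret model p using assms by (simp add: model_def)
  show ?thesis using main by blast
qed

end
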